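(* For each $c<\frac14$ there is $\lambda_0$ such that for all $\lambda>\lambda_0$ and all even rectangles $\Lambda$, $$Z^{\mathrm{per}}_{\Lambda,\lambda}\ge e^{c\lambda^{-1/2}\mathrm{Area}(\Lambda)}.$$
   Context: Tiles: $T_{(x,y)}=[x-1,x+1]\times[y-1,y+1]$; $\Omega=\{\sigma\in\{0,1\}^{\mathbb{Z}^2}: \sigma(u)=\sigma(v)=1,u\ne v\Rightarrow\mathrm{int}(T_u)\cap\mathrm{int}(T_v)=\emptyset\}$. A rectangle $[x,x+K]\times[y,y+L]$ (integers, $K,L\ge1$) is even if $x,y,K,L$ are even; $\mathrm{Area}=KL$. Faces: unit squares with integer corners; vacant if in no tile. $w_{\Lambda,\lambda}(\sigma)=\lambda^{-\frac14\#\{\text{vacant faces}\subset\Lambda\}}$; $\Omega^{\mathrm{per}}_\Lambda$ = configurations periodic under $(\mathrm{Width}\Lambda,0),(0,\mathrm{Height}\Lambda)$; $Z^{\mathrm{per}}_{\Lambda,\lambda}=\sum_{\sigma\in\Omega^{\mathrm{per}}_\Lambda}w_{\Lambda,\lambda}(\sigma)$. *)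

theory Defs
  imports "HOL-Analysis.Analysis"
begin

type_synonym config = "int \<times> int \<Rightarrow> bool"

definition tile :: "int \<times> int \<Rightarrow> (real \<times> real) set" where
  "tile u = {real_of_int (fst u) - 1 .. real_of_int (fst u) + 1} \<times>
            {real_of_int (snd u) - 1 .. real_of_int (snd u) + 1}"

definition Omega :: "config set" where
  "Omega = {\<sigma>. \<forall>u v. \<sigma> u \<and> \<sigma> v \<and> u \<noteq> v \<longrightarrow> interior (tile u) \<inter> interior (tile v) = {}}"

definition rect :: "int \<Rightarrow> int \<Rightarrow> int \<Rightarrow> int \<Rightarrow> (real \<times> real) set" where
  "rect x y K L = {real_of_int x .. real_of_int (x + K)} \<times> {real_of_int y .. real_of_int (y + L)}"

definition even_rect :: "int \<Rightarrow> int \<Rightarrow> int \<Rightarrow> int \<Rightarrow> bool" where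
  "even_rect x y K L \<longleftrightarrow> K \<ge> 1 \<and> L \<ge> 1 \<and> even x \<and> even y \<and> even K \<and> even L"

definition face :: "int \<times> int \<Rightarrow> (real \<times> real) set" where
  "face p = {real_of_int (fst p) .. real_of_int (fst p) + 1} \<times>
            {real_of_int (snd p) .. real_of_int (snd p) + 1}"

definition vacant :: "config \<Rightarrow> int \<times> int \<Rightarrow> bool" where
  "vacant \<sigma> p \<longleftrightarrow> \<not> (\<exists>u. \<sigma> u \<and> face p \<subseteq> tile u)"

definition vacant_count :: "int \<Rightarrow> int \<Rightarrow> int \<Rightarrow> int \<Rightarrow> config \<Rightarrow> nat" where
  "vacant_count x y K L \<sigma> = card {p. vacant \<sigma> p \<and> face p \<subseteq> rect x y K L}"

definition weight :: "int \<Rightarrow> int \<Rightarrow> int \<Rightarrow> int \<Rightarrow> real \<Rightarrow> config \<Rightarrow> real" where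
  "weight x y K L lam \<sigma> = lam powr (- (1/4) * real (vacant_count x y K L \<sigma>))"

definition Omega_per :: "int \<Rightarrow> int \<Rightarrow> config set" where
  "Omega_per K L = {\<sigma> \<in> Omega. \<forall>u. \<sigma> (fst u + K, snd u) = \<sigma> u \<and> \<sigma> (fst u, snd u + L) = \<sigma> u}"

definition Z_per :: "int \<Rightarrow> int \<Rightarrow> int \<Rightarrow> int \<Rightarrow> real \<Rightarrow> real" where
  "Z_per x y K L lam = (\<Sum>\<sigma>\<in>Omega_per K L. weight x y K L lam \<sigma>)"

end

theory Submission
  imports Defs
begin


lemma sum_pow_card:
  fixes t :: real assumes "finite A"
  shows "(\<Sum>X\<in>Pow A. t ^ card X) = (1 + t) ^ card A"
proof -
  have "(\<Prod>x\<in>A. t + 1) = (\<Sum>X\<in>Pow A. (\<Prod>x\<in>X. t) * (\<Prod>x\<in>A-X. 1))"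
    by (rule prod_add[OF assms])
  thus ?thesis by (simp add: add.commute)
qed

lemma even_sum_bound:
  fixes t :: real assumes "finite A" "0 \<le> t" "t \<le> 1"
  shows "2 * (\<Sum>G\<in>{G. G \<subseteq> A \<and> even (card G)}. t ^ card G) \<ge> (1 + t) ^ card A"
proof -
  have fP: "finite (Pow A)" using assms by simp
  have "(\<Sum>X\<in>Pow A. t ^ card X + (-t) ^ card X) = (1+t)^card A + (1 - t)^card A"
    using sum_pow_card[OF assms(1), of t] sum_pow_card[OF assms(1), of "-t"]
    by (simp add: sum.distrib)
  also have "(\<Sum>X\<in>Pow A. t ^ card X + (-t) ^ card X) = (\<Sum>X\<in>Pow A. if even (card X) then 2 * t ^ card X else 0)"
    by (rule sum.cong) auto
  also have "\<dots> = (\<Sum>X\<in>{G. G \<subseteq> A \<and> even (card G)}. 2 * t ^ card X)"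
    using fP by (subst sum.If_cases) (auto intro: sum.cong)
  finally have "2 * (\<Sum>G\<in>{G. G \<subseteq> A \<and> even (card G)}. t ^ card G) = (1+t)^card A + (1 - t)^card A"
    by (simp add: sum_distrib_left)
  moreover have "(1 - t)^card A \<ge> 0" using assms by simp
  ultimately show ?thesis by linarith
qed


definition hc :: "int set \<Rightarrow> int \<Rightarrow> nat" where "hc G j = card {g\<in>G. g \<le> j}"
definition sv :: "int set \<Rightarrow> bool \<Rightarrow> int \<Rightarrow> bool" where "sv G p j = (odd (hc G j) \<noteq> p)"
definition prv :: "int \<Rightarrow> int \<Rightarrow> int" where "prv n j = (if j = 0 then n - 1 else j - 1)"

lemma hc_step:
  assumes "finite G"
  shows "hc G j = hc G (j - 1) + (if j \<in> G then 1 else 0)"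
proof -
  have "{g\<in>G. g \<le> j} = (if j \<in> G then insert j {g\<in>G. g \<le> j - 1} else {g\<in>G. g \<le> j - 1})"
    by auto (metis order_le_less)
  moreover have "finite {g\<in>G. g \<le> j - 1}" using assms by simp
  ultimately show ?thesis unfolding hc_def by auto
qed

lemma KL:
  assumes "finite G" "G \<subseteq> {0..<n}" "even (card G)" "0 \<le> j" "j < n"
  shows "j \<in> G \<longleftrightarrow> sv G p j \<noteq> sv G p (prv n j)"
proof (cases "j = 0")
  case True
  have "{g\<in>G. g \<le> n - 1} = G" using assms(2) by auto
  hence h1: "hc G (n - 1) = card G" by (simp add: hc_def)
  have "{g\<in>G. g \<le> 0} = G \<inter> {0}" using assms(2) by auto
  hence "hc G 0 = (if 0 \<in> G then 1 else 0)" by (auto simp: hc_def)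
  thus ?thesis using True h1 assms(3) by (auto simp: sv_def prv_def)
next
  case False
  thus ?thesis using hc_step[OF assms(1), of j] by (auto simp: sv_def prv_def)
qed


definition Cs :: "int \<Rightarrow> int set \<Rightarrow> bool \<Rightarrow> int set" where
"Cs n G p = {c. \<exists>j. 0 \<le> j \<and> j < n \<and> ((c = 2*j+2 \<and> sv G p j) \<or> (c = 2*j+1 \<and> \<not> sv G p j \<and> j \<notin> G))}"

definition good :: "int \<Rightarrow> int set \<times> bool \<Rightarrow> bool" where
"good n Gp \<longleftrightarrow> finite (fst Gp) \<and> fst Gp \<subseteq> {0..<n} \<and> even (card (fst Gp))"

lemma Cs_range: "c \<in> Cs n G p \<Longrightarrow> 1 \<le> c \<and> c \<le> 2*n"
  unfolding Cs_def by auto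

lemma Cs_adj:
  assumes "good n (G,p)" "c \<in> Cs n G p" "c + 1 \<in> Cs n G p"
  shows False
proof -
  from assms(2) obtain j where j: "0 \<le> j" "j < n" "(c = 2*j+2 \<and> sv G p j) \<or> (c = 2*j+1 \<and> \<not> sv G p j \<and> j \<notin> G)"
    unfolding Cs_def by auto
  from assms(3) obtain k where k: "0 \<le> k" "k < n" "(c+1 = 2*k+2 \<and> sv G p k) \<or> (c+1 = 2*k+1 \<and> \<not> sv G p k \<and> k \<notin> G)"
    unfolding Cs_def by auto
  have g: "finite G" "G \<subseteq> {0..<n}" "even (card G)" using assms(1) by (auto simp: good_def)
  show False
  proof (cases "c = 2*j+2")
    case True
    with j k have "k = j + 1" "\<not> sv G p k" "k \<notin> G" "sv G p j" by auto presburger+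
    with KL[OF g, of k p] k j(1) show False by (auto simp: prv_def)
  next
    case False
    with j k have "k = j" "\<not> sv G p j" "sv G p k" by auto presburger+
    thus False by simp
  qed
qed

lemma Cs_wrap:
  assumes "good n (G,p)" "1 \<in> Cs n G p" "2*n \<in> Cs n G p"
  shows False
proof -
  have g: "finite G" "G \<subseteq> {0..<n}" "even (card G)" using assms(1) by (auto simp: good_def)
  from assms(2) have a: "\<not> sv G p 0" "0 \<notin> G" "0 < n" unfolding Cs_def by auto presburger+
  from assms(3) have "\<exists>j. 2*n = 2*j+2 \<and> sv G p j" unfolding Cs_def
    by auto presburger
  then obtain j where "2*n = 2*j+2" "sv G p j" by blast
  hence b: "sv G p (n - 1)" by (metis add_diff_cancel_right' mult_cancel_left1 ring_class.ring_distribs(1) zero_neq_numeral mult_cancel_left)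
  from KL[OF g, of 0 p] a b show False by (auto simp: prv_def)
qed

lemma row_arith:
  fixes c c' L d :: int
  assumes "1 \<le> c" "c \<le> L" "1 \<le> c'" "c' \<le> L" "\<bar>c - c' + L*d\<bar> < 2"
  shows "(d = 0 \<and> \<bar>c - c'\<bar> < 2) \<or> (d = 1 \<and> c = 1 \<and> c' = L) \<or> (d = -1 \<and> c = L \<and> c' = 1)"
proof -
  have L: "L \<ge> 1" using assms by simp
  consider "d \<ge> 2" | "d = 1" | "d = 0" | "d = -1" | "d \<le> -2" by linarith
  thus ?thesis
  proof cases
    case 1
    hence "L*d \<ge> L*2" using L by (intro mult_left_mono) auto
    thus ?thesis using assms by linarith
  next
    case 5
    hence "L*d \<le> L*(-2)" using L by (intro mult_left_mono) auto
    thus ?thesis using assms by linarith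
  qed (use assms in auto)
qed

lemma col_arith:
  fixes i i' q q' m :: int
  assumes "0 \<le> i" "i < m" "0 \<le> i'" "i' < m" "\<bar>(2*i + 1 + 2*m*q) - (2*i' + 1 + 2*m*q')\<bar> < 2"
  shows "i = i' \<and> q = q'"
proof -
  define d where "d = q - q'"
  have e: "(2*i + 1 + 2*m*q) - (2*i' + 1 + 2*m*q') = 2*(i - i') + 2*(m*d)"
    by (simp add: d_def algebra_simps)
  have m: "m \<ge> 1" using assms by simp
  have ii: "i - i' \<ge> 1 - m" "i' - i \<ge> 1 - m" using assms by presburger+
  have v: "\<bar>2*(i - i') + 2*(m*d)\<bar> < 2" using assms(5) e by simp
  hence v1: "2*(i - i') + 2*(m*d) < 2" "-2 < 2*(i - i') + 2*(m*d)" by (simp_all add: abs_less_iff)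
  obtain w where w: "w = m*d" by blast
  have v2: "2*(i - i') + 2*w < 2" "-2 < 2*(i - i') + 2*w" using v1 w by simp_all
  consider "d \<ge> 1" | "d = 0" | "d \<le> -1" by linarith
  hence "d = 0"
  proof cases
    case 1
    hence "w \<ge> m" using m mult_left_mono[of 1 d m] w by simp
    thus ?thesis using v2 ii by arith
  next
    case 3
    hence "w \<le> -m" using m mult_left_mono[of d "-1" m] w by simp
    thus ?thesis using v2 ii by arith
  qed
  thus ?thesis using assms v1 by (auto simp: d_def)
qed



definition cfg :: "int \<Rightarrow> int \<Rightarrow> int \<Rightarrow> int \<Rightarrow> (int \<Rightarrow> int set \<times> bool) \<Rightarrow> config" where
"cfg x y K L f u = (\<exists>i q1 q2 c. 0 \<le> i \<and> i < K div 2 \<and> c \<in> Cs (L div 2) (fst (f i)) (snd (f i))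
     \<and> fst u = x + 2*i + 1 + K*q1 \<and> snd u = y + c + L*q2)"

lemma tile_disj:
  assumes "interior (tile u) \<inter> interior (tile v) \<noteq> {}"
  shows "\<bar>fst u - fst v\<bar> < 2 \<and> \<bar>snd u - snd v\<bar> < 2"
proof -
  obtain p1 p2 where "(p1,p2) \<in> interior (tile u)" "(p1,p2) \<in> interior (tile v)" using assms by auto
  hence h: "real_of_int (fst u) - 1 < p1" "p1 < real_of_int (fst u) + 1"
    "real_of_int (fst v) - 1 < p1" "p1 < real_of_int (fst v) + 1"
    "real_of_int (snd u) - 1 < p2" "p2 < real_of_int (snd u) + 1"
    "real_of_int (snd v) - 1 < p2" "p2 < real_of_int (snd v) + 1"
    by (auto simp: tile_def interior_Times)
  hence "real_of_int \<bar>fst u - fst v\<bar> < 2" "real_of_int \<bar>snd u - snd v\<bar> < 2" by auto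
  thus ?thesis by linarith
qed

lemma cfg_Omega:
  assumes K: "K \<ge> 1" "even K" and L: "L \<ge> 1" "even L"
    and f: "\<And>i. 0 \<le> i \<Longrightarrow> i < K div 2 \<Longrightarrow> good (L div 2) (f i)"
  shows "cfg x y K L f \<in> Omega"
  unfolding Omega_def
proof (intro CollectI allI impI, elim conjE)
  fix u v assume su: "cfg x y K L f u" and sv: "cfg x y K L f v" and uv: "u \<noteq> v"
  show "interior (tile u) \<inter> interior (tile v) = {}"
  proof (rule ccontr)
    assume "interior (tile u) \<inter> interior (tile v) \<noteq> {}"
    from tile_disj[OF this] have d1: "\<bar>fst u - fst v\<bar> < 2" and d2: "\<bar>snd u - snd v\<bar> < 2" by auto
    define m where "m = K div 2"
    define n where "n = L div 2"
    have Km: "K = 2*m" and Ln: "L = 2*n" using K L by (auto simp: m_def n_def)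
    from su obtain i q1 q2 c where u: "0 \<le> i" "i < m" "c \<in> Cs n (fst (f i)) (snd (f i))"
       "fst u = x + 2*i + 1 + K*q1" "snd u = y + c + L*q2" unfolding cfg_def m_def n_def by blast
    from sv obtain i' q1' q2' c' where v: "0 \<le> i'" "i' < m" "c' \<in> Cs n (fst (f i')) (snd (f i'))"
       "fst v = x + 2*i' + 1 + K*q1'" "snd v = y + c' + L*q2'" unfolding cfg_def m_def n_def by blast
    have "\<bar>(2*i + 1 + 2*m*q1) - (2*i' + 1 + 2*m*q1')\<bar> < 2" using d1 u v Km by (simp add: algebra_simps)
    from col_arith[OF u(1,2) v(1,2) this] have ii: "i = i'" "q1 = q1'" by auto
    have fu: "fst u = fst v" using u v ii by simp
    obtain G p where Gp: "f i = (G,p)" by fastforce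
    have g: "good n (G,p)" using f[of i] u Gp by (simp add: m_def n_def)
    have cc: "c \<in> Cs n G p" "c' \<in> Cs n G p" using u(3) v(3) Gp ii by auto
    have r: "1 \<le> c" "c \<le> L" "1 \<le> c'" "c' \<le> L" using Cs_range[OF cc(1)] Cs_range[OF cc(2)] Ln by auto
    have "\<bar>c - c' + L*(q2 - q2')\<bar> < 2" using d2 u v by (simp add: algebra_simps)
    from row_arith[OF r this] consider
       "q2 - q2' = 0" "\<bar>c - c'\<bar> < 2" | "q2 - q2' = 1" "c = 1" "c' = L" | "q2 - q2' = -1" "c = L" "c' = 1"
      by blast
    thus False
    proof cases
      case 1
      show False
      proof (cases "c = c'")
        case True
        hence "snd u = snd v" using u v 1 by simp
        thus False using fu uv by (simp add: prod_eq_iff)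
      next
        case False
        hence "c' = c + 1 \<or> c = c' + 1" using 1 by arith
        thus False using Cs_adj[OF g] cc by blast
      qed
    next
      case 2 thus False using Cs_wrap[OF g] cc Ln by auto
    next
      case 3 thus False using Cs_wrap[OF g] cc Ln by auto
    qed
  qed
qed

lemma cfg_per1: "cfg x y K L f (a + K, b) = cfg x y K L f (a, b)"
proof
  assume "cfg x y K L f (a + K, b)"
  then obtain i q1 q2 c where h: "0 \<le> i" "i < K div 2" "c \<in> Cs (L div 2) (fst (f i)) (snd (f i))"
     "a + K = x + 2*i+1+K*q1" "b = y + c + L*q2" unfolding cfg_def by auto
  have "a = x + 2*i + 1 + K*(q1 - 1)" using h(4) by (simp add: algebra_simps)
  thus "cfg x y K L f (a,b)" unfolding cfg_def using h(1-3,5) by fastforce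
next
  assume "cfg x y K L f (a, b)"
  then obtain i q1 q2 c where h: "0 \<le> i" "i < K div 2" "c \<in> Cs (L div 2) (fst (f i)) (snd (f i))"
     "a = x + 2*i+1+K*q1" "b = y + c + L*q2" unfolding cfg_def by auto
  have "a + K = x + 2*i + 1 + K*(q1 + 1)" using h(4) by (simp add: algebra_simps)
  thus "cfg x y K L f (a + K,b)" unfolding cfg_def using h(1-3,5) by fastforce
qed

lemma cfg_per2: "cfg x y K L f (a, b + L) = cfg x y K L f (a, b)"
proof
  assume "cfg x y K L f (a, b + L)"
  then obtain i q1 q2 c where h: "0 \<le> i" "i < K div 2" "c \<in> Cs (L div 2) (fst (f i)) (snd (f i))"
     "a = x + 2*i+1+K*q1" "b + L = y + c + L*q2" unfolding cfg_def by auto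
  have "b = y + c + L*(q2 - 1)" using h(5) by (simp add: algebra_simps)
  thus "cfg x y K L f (a,b)" unfolding cfg_def using h(1-4) by fastforce
next
  assume "cfg x y K L f (a, b)"
  then obtain i q1 q2 c where h: "0 \<le> i" "i < K div 2" "c \<in> Cs (L div 2) (fst (f i)) (snd (f i))"
     "a = x + 2*i+1+K*q1" "b = y + c + L*q2" unfolding cfg_def by auto
  have "b + L = y + c + L*(q2 + 1)" using h(5) by (simp add: algebra_simps)
  thus "cfg x y K L f (a,b + L)" unfolding cfg_def using h(1-4) by fastforce
qed


lemma cfg_intro:
  "0 \<le> i \<Longrightarrow> i < K div 2 \<Longrightarrow> c \<in> Cs (L div 2) (fst (f i)) (snd (f i)) \<Longrightarrow>
   cfg x y K L f (x+2*i+1, y + c + L*r)"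
  unfolding cfg_def by (rule exI[of _ i], rule exI[of _ 0]) auto

lemma face_sub:
  assumes "fst u - 1 \<le> a0" "a0 \<le> fst u" "snd u - 1 \<le> b0" "b0 \<le> snd u"
  shows "face (a0,b0) \<subseteq> tile u"
proof -
  have "real_of_int (fst u) - 1 \<le> real_of_int a0" "real_of_int a0 + 1 \<le> real_of_int (fst u) + 1"
       "real_of_int (snd u) - 1 \<le> real_of_int b0" "real_of_int b0 + 1 \<le> real_of_int (snd u) + 1"
    using assms by linarith+
  thus ?thesis unfolding face_def tile_def by auto
qed

lemma sub_rect:
  assumes "face (a0,b0) \<subseteq> rect x y K L"
  shows "x \<le> a0 \<and> a0 + 1 \<le> x + K \<and> y \<le> b0 \<and> b0 + 1 \<le> y + L"
proof -
  have "(real_of_int a0, real_of_int b0) \<in> face (a0,b0)"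
       "(real_of_int a0 + 1, real_of_int b0 + 1) \<in> face (a0,b0)" unfolding face_def by auto
  hence "(real_of_int a0, real_of_int b0) \<in> rect x y K L"
        "(real_of_int a0 + 1, real_of_int b0 + 1) \<in> rect x y K L" using assms by auto
  hence "real_of_int x \<le> real_of_int a0" "real_of_int a0 + 1 \<le> real_of_int (x + K)"
        "real_of_int y \<le> real_of_int b0" "real_of_int b0 + 1 \<le> real_of_int (y + L)"
    unfolding rect_def by auto
  thus ?thesis by linarith
qed

lemma sv_last:
  assumes "good n (G,p)" "n \<ge> 1"
  shows "sv G p (n - 1) = p"
proof -
  have "{g\<in>G. g \<le> n - 1} = G" using assms(1) by (auto simp: good_def)
  thus ?thesis using assms(1) by (simp add: sv_def hc_def good_def)
qed

lemma good_eq: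
  assumes "good n (G,p)" "good n (G',p')" "n \<ge> 1"
    and "\<And>j. 0 \<le> j \<Longrightarrow> j < n \<Longrightarrow> sv G p j = sv G' p' j"
  shows "G = G' \<and> p = p'"
proof -
  have pp: "p = p'" using sv_last[OF assms(1,3)] sv_last[OF assms(2,3)] assms(3) assms(4)[of "n-1"] by auto
  have pr: "0 \<le> prv n j \<and> prv n j < n" if "0 \<le> j" "j < n" for j using that by (auto simp: prv_def)
  have g1: "finite G" "G \<subseteq> {0..<n}" "even (card G)" using assms(1) by (auto simp: good_def)
  have g2: "finite G'" "G' \<subseteq> {0..<n}" "even (card G')" using assms(2) by (auto simp: good_def)
  have "j \<in> G \<longleftrightarrow> j \<in> G'" for j
  proof (cases "0 \<le> j \<and> j < n")
    case True
    thus ?thesis using KL[OF g1, of j p] KL[OF g2, of j p'] assms(4)[of j] assms(4)[of "prv n j"] pr[of j] by auto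
  next
    case False thus ?thesis using g1 g2 by auto
  qed
  thus ?thesis using pp by auto
qed

lemma cfg_center:
  assumes K: "K \<ge> 1" "even K" and L: "L \<ge> 1" "even L"
    and "0 \<le> i" "i < K div 2" "0 \<le> j" "j < L div 2"
  shows "cfg x y K L f (x+2*i+1, y+2*j+2) \<longleftrightarrow> sv (fst (f i)) (snd (f i)) j"
proof
  assume "sv (fst (f i)) (snd (f i)) j"
  hence "2*j+2 \<in> Cs (L div 2) (fst (f i)) (snd (f i))" using assms(7,8) unfolding Cs_def by blast
  hence "cfg x y K L f (x+2*i+1, y + (2*j+2) + L*0)" by (intro cfg_intro assms(5,6))
  thus "cfg x y K L f (x+2*i+1, y+2*j+2)" by (simp add: algebra_simps)
next
  define m where "m = K div 2"
  define n where "n = L div 2"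
  have Km: "K = 2*m" and Ln: "L = 2*n" using K L by (auto simp: m_def n_def)
  assume "cfg x y K L f (x+2*i+1, y+2*j+2)"
  then obtain i' q1 q2 c where h: "0 \<le> i'" "i' < m" "c \<in> Cs n (fst (f i')) (snd (f i'))"
     "x+2*i+1 = x + 2*i' + 1 + K*q1" "y+2*j+2 = y + c + L*q2" unfolding cfg_def m_def n_def by auto
  have im: "i < m" using assms(6) m_def by simp
  have jn: "j < n" using assms(8) n_def by simp
  have "\<bar>(2*i + 1 + 2*m*0) - (2*i' + 1 + 2*m*q1)\<bar> < 2" using h(4) Km by simp
  from col_arith[OF assms(5) im h(1,2) this] have ii: "i' = i" by simp
  have r: "1 \<le> c" "c \<le> L" "1 \<le> 2*j+2" "2*j+2 \<le> L" using Cs_range[OF h(3)] Ln assms(7) jn by auto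
  have "\<bar>c - (2*j+2) + L*q2\<bar> < 2" using h(5) by simp
  from row_arith[OF r this] have "c = 2*j+2" using h(5) by auto
  with h(3) ii show "sv (fst (f i)) (snd (f i)) j" unfolding Cs_def by auto presburger
qed



definition SS :: "int \<Rightarrow> (int set \<times> bool) set" where "SS n = {Gp. good n Gp}"

lemma cfg_inj:
  assumes K: "K \<ge> 1" "even K" and L: "L \<ge> 1" "even L"
    and f: "f \<in> PiE {0..<K div 2} (\<lambda>_. SS (L div 2))" and f': "f' \<in> PiE {0..<K div 2} (\<lambda>_. SS (L div 2))"
    and eq: "cfg x y K L f = cfg x y K L f'"
  shows "f = f'"
proof (rule PiE_ext[OF f f'])
  fix i assume i: "i \<in> {0..<K div 2}"
  obtain G p where Gp: "f i = (G,p)" by fastforce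
  obtain G' p' where Gp': "f' i = (G',p')" by fastforce
  have g: "good (L div 2) (G,p)" "good (L div 2) (G',p')" using PiE_mem[OF f i] PiE_mem[OF f' i] Gp Gp' by (auto simp: SS_def)
  have n1: "L div 2 \<ge> 1" using L by auto
  have "G = G' \<and> p = p'"
  proof (rule good_eq[OF g n1])
    fix j assume j: "0 \<le> j" "j < L div 2"
    show "sv G p j = sv G' p' j"
      using cfg_center[OF K L _ _ j, of i x y f] cfg_center[OF K L _ _ j, of i x y f'] i eq Gp Gp' by auto
  qed
  thus "f i = f' i" using Gp Gp' by simp
qed

lemma per_shift:
  assumes "\<sigma> \<in> Omega_per K L"
  shows "\<sigma> (a + K*q, b + L*r) = \<sigma> (a, b)"
proof -
  have p1: "\<And>u. \<sigma> (fst u + K, snd u) = \<sigma> u" "\<And>u. \<sigma> (fst u, snd u + L) = \<sigma> u"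
    using assms by (auto simp: Omega_per_def)
  have A: "\<sigma> (a + K * int k, b) = \<sigma> (a, b)" for a b k
  proof (induction k)
    case (Suc k)
    have "\<sigma> (a + K*int (Suc k), b) = \<sigma> (fst (a + K*int k, b) + K, snd (a + K*int k, b))"
      by (simp add: algebra_simps)
    also have "\<dots> = \<sigma> (a + K*int k, b)" by (rule p1(1))
    finally show ?case using Suc by simp
  qed simp
  have B: "\<sigma> (a, b + L * int k) = \<sigma> (a, b)" for a b k
  proof (induction k)
    case (Suc k)
    have "\<sigma> (a, b + L*int (Suc k)) = \<sigma> (fst (a, b + L*int k), snd (a, b + L*int k) + L)"
      by (simp add: algebra_simps)
    also have "\<dots> = \<sigma> (a, b + L*int k)" by (rule p1(2))
    finally show ?case using Suc by simp
  qed simp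
  have A': "\<sigma> (a + K*q, b) = \<sigma> (a, b)" for a b q
  proof (cases "q \<ge> 0")
    case True thus ?thesis using A[of a "nat q" b] by simp
  next
    case False
    hence "\<sigma> (a + K*q + K * int (nat (-q)), b) = \<sigma> (a + K*q, b)" using A by blast
    thus ?thesis using False by (simp add: algebra_simps)
  qed
  have B': "\<sigma> (a, b + L*r) = \<sigma> (a, b)" for a b r
  proof (cases "r \<ge> 0")
    case True thus ?thesis using B[of a b "nat r"] by simp
  next
    case False
    hence "\<sigma> (a, b + L*r + L * int (nat (-r))) = \<sigma> (a, b + L*r)" using B by blast
    thus ?thesis using False by (simp add: algebra_simps)
  qed
  show ?thesis using A' B' by metis
qed

lemma Omega_per_finite:
  assumes "K \<ge> 1" "L \<ge> 1"
  shows "finite (Omega_per K L)"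
proof -
  define box where "box = {0..<K} \<times> {0..<L}"
  define \<phi> where "\<phi> \<sigma> = {u \<in> box. \<sigma> u}" for \<sigma> :: config
  have red: "\<sigma> (a,b) = \<sigma> (a mod K, b mod L)" if "\<sigma> \<in> Omega_per K L" for \<sigma> and a b :: int
  proof -
    have "\<sigma> (a mod K + K*(a div K), b mod L + L*(b div L)) = \<sigma> (a mod K, b mod L)"
      by (rule per_shift[OF that])
    moreover have "a mod K + K*(a div K) = a" "b mod L + L*(b div L) = b"
      by (simp_all add: mod_mult_div_eq)
    ultimately show ?thesis by simp
  qed
  have inj: "inj_on \<phi> (Omega_per K L)"
  proof (rule inj_onI)
    fix \<sigma> \<tau> assume s: "\<sigma> \<in> Omega_per K L" and t: "\<tau> \<in> Omega_per K L" and e: "\<phi> \<sigma> = \<phi> \<tau>"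
    show "\<sigma> = \<tau>"
    proof
      fix u :: "int \<times> int"
      obtain a b where u: "u = (a,b)" by fastforce
      have "0 \<le> a mod K" "a mod K < K" "0 \<le> b mod L" "b mod L < L" using assms by simp_all
      hence inb: "(a mod K, b mod L) \<in> box" unfolding box_def by simp
      have "\<sigma> (a mod K, b mod L) = \<tau> (a mod K, b mod L)"
        using e inb unfolding \<phi>_def by blast
      thus "\<sigma> u = \<tau> u" using red[OF s] red[OF t] u by simp
    qed
  qed
  have "\<phi> ` Omega_per K L \<subseteq> Pow box" by (auto simp: \<phi>_def)
  moreover have "finite (Pow box)" by (simp add: box_def)
  ultimately show ?thesis using inj inj_on_finite by blast
qed



lemma cover:
  assumes "0 \<le> i" "i < K div 2" "c \<in> Cs (L div 2) (fst (f i)) (snd (f i))"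
    "x + 2*i \<le> a0" "a0 \<le> x + 2*i + 1" "y + c + L*q2 - 1 \<le> b0" "b0 \<le> y + c + L*q2"
  shows "\<not> vacant (cfg x y K L f) (a0,b0)"
proof -
  have "cfg x y K L f (x+2*i+1, y + c + L*q2)" using cfg_intro[where f=f and x=x and y=y and r=q2] assms(1-3) by blast
  moreover have "face (a0,b0) \<subseteq> tile (x+2*i+1, y + c + L*q2)"
    by (rule face_sub) (use assms in auto)
  ultimately show ?thesis unfolding vacant_def by blast
qed

lemma vac_sub:
  assumes K: "K \<ge> 1" "even K" and L: "L \<ge> 1" "even L"
    and f: "f \<in> PiE {0..<K div 2} (\<lambda>_. SS (L div 2))"
    and v: "vacant (cfg x y K L f) (a0,b0)" and r: "face (a0,b0) \<subseteq> rect x y K L"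
  shows "\<exists>i\<in>{0..<K div 2}. \<exists>e\<in>{0,1::int}. \<exists>j\<in>fst (f i).
           (a0,b0) = (x+2*i+e, y+2*j + (if sv (fst (f i)) (snd (f i)) j then 0 else 1))"
proof (rule ccontr)
  assume nB: "\<not> ?thesis"
  define m where "m = K div 2"
  define n where "n = L div 2"
  have Km: "K = 2*m" and Ln: "L = 2*n" using K L by (auto simp: m_def n_def)
  have bd: "x \<le> a0" "a0 + 1 \<le> x + K" "y \<le> b0" "b0 + 1 \<le> y + L" using sub_rect[OF r] by auto
  define i where "i = (a0 - x) div 2"
  define e where "e = (a0 - x) mod 2"
  define j where "j = (b0 - y) div 2"
  define e' where "e' = (b0 - y) mod 2"
  have ie: "a0 = x + 2*i + e" "e = 0 \<or> e = 1" "0 \<le> i" "i < m" using bd Km unfolding i_def e_def by presburger+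
  have je: "b0 = y + 2*j + e'" "e' = 0 \<or> e' = 1" "0 \<le> j" "j < n" using bd Ln unfolding j_def e'_def by presburger+
  have im: "0 \<le> i" "i < K div 2" using ie m_def by auto
  obtain G p where Gp: "f i = (G,p)" by fastforce
  have "f i \<in> SS (L div 2)" using PiE_mem[OF f] im by auto
  hence g: "good n (G,p)" using Gp by (simp add: SS_def n_def)
  have g': "finite G" "G \<subseteq> {0..<n}" "even (card G)" using g by (auto simp: good_def)
  have ax: "x + 2*i \<le> a0" "a0 \<le> x + 2*i + 1" using ie by auto
  have notB: "\<not> (j \<in> G \<and> e' = (if sv G p j then 0 else 1))"
  proof
    assume a: "j \<in> G \<and> e' = (if sv G p j then 0 else 1)"
    have "i \<in> {0..<K div 2}" "e \<in> {0,1}" using ie m_def by auto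
    moreover have "j \<in> fst (f i)" using a Gp by simp
    moreover have "(a0,b0) = (x+2*i+e, y+2*j + (if sv (fst (f i)) (snd (f i)) j then 0 else 1))"
      using a ie je Gp by auto
    ultimately show False using nB by blast
  qed
  have Cs1: "2*k+2 \<in> Cs n G p" if "0 \<le> k" "k < n" "sv G p k" for k
    unfolding Cs_def using that by blast
  have Cs2: "2*k+1 \<in> Cs n G p" if "0 \<le> k" "k < n" "\<not> sv G p k" "k \<notin> G" for k
    unfolding Cs_def using that by blast
  have cov: "\<not> vacant (cfg x y K L f) (a0,b0)" if "c \<in> Cs n G p" "y + c + L*q2 - 1 \<le> b0" "b0 \<le> y + c + L*q2" for c q2
    by (rule cover[OF im _ ax that(2,3)]) (use that Gp n_def in simp)
  show False
  proof (cases "e' = 1")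
    case True
    show False
    proof (cases "sv G p j")
      case True
      from cov[OF Cs1[OF je(3,4) True], of 0] je \<open>e' = 1\<close> v show False by simp
    next
      case False
      hence "j \<notin> G" using notB \<open>e' = 1\<close> by auto
      from cov[OF Cs2[OF je(3,4) False this], of 0] je \<open>e' = 1\<close> v show False by simp
    qed
  next
    case False
    hence e0: "e' = 0" using je by auto
    show False
    proof (cases "\<not> sv G p j \<and> j \<notin> G")
      case True
      from cov[OF Cs2[OF je(3,4)], of 0] True je e0 v show False by simp
    next
      case False
      have spr: "sv G p (prv n j)"
      proof (cases "j \<in> G")
        case True
        hence "\<not> sv G p j" using notB e0 by auto
        thus ?thesis using KL[OF g' je(3,4), of p] True by auto
      next
        case nG: False
        hence "sv G p j" using False by auto
        thus ?thesis using KL[OF g' je(3,4), of p] nG by auto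
      qed
      show False
      proof (cases "j = 0")
        case True
        hence "sv G p (n - 1)" using spr by (simp add: prv_def)
        hence c: "2*(n-1)+2 \<in> Cs n G p" using Cs1[of "n-1"] je by auto
        have "y + (2*(n-1)+2) + L*(-1) = b0" using True je e0 Ln by simp
        with cov[OF c, of "-1"] v show False by simp
      next
        case False
        hence "sv G p (j - 1)" using spr by (simp add: prv_def)
        hence c: "2*(j-1)+2 \<in> Cs n G p" using Cs1[of "j-1"] je False by auto
        have "y + (2*(j-1)+2) + L*0 = b0" using je e0 by simp
        with cov[OF c, of 0] v show False by simp
      qed
    qed
  qed
qed



lemma SS_finite: "finite (SS n)"
proof -
  have "SS n \<subseteq> Pow {0..<n} \<times> UNIV" by (auto simp: SS_def good_def)
  thus ?thesis by (rule finite_subset) simp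
qed

lemma vac_count:
  assumes K: "K \<ge> 1" "even K" and L: "L \<ge> 1" "even L"
    and f: "f \<in> PiE {0..<K div 2} (\<lambda>_. SS (L div 2))"
  shows "vacant_count x y K L (cfg x y K L f) \<le> (\<Sum>i\<in>{0..<K div 2}. 2 * card (fst (f i)))"
proof -
  define B where "B = (\<Union>i\<in>{0..<K div 2}. \<Union>e\<in>{0,1::int}.
     (\<lambda>j. (x+2*i+e, y+2*j + (if sv (fst (f i)) (snd (f i)) j then 0 else 1))) ` fst (f i))"
  have fin: "finite (fst (f i))" if "i \<in> {0..<K div 2}" for i
    using PiE_mem[OF f that] by (cases "f i") (auto simp: SS_def good_def)
  have sub: "{p. vacant (cfg x y K L f) p \<and> face p \<subseteq> rect x y K L} \<subseteq> B"
  proof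
    fix p assume "p \<in> {p. vacant (cfg x y K L f) p \<and> face p \<subseteq> rect x y K L}"
    moreover obtain a0 b0 where "p = (a0,b0)" by fastforce
    ultimately have "vacant (cfg x y K L f) (a0,b0)" "face (a0,b0) \<subseteq> rect x y K L" by auto
    from vac_sub[OF K L f this] show "p \<in> B" unfolding B_def using \<open>p = (a0,b0)\<close> by blast
  qed
  have fB: "finite B" unfolding B_def using fin by auto
  have "vacant_count x y K L (cfg x y K L f) \<le> card B"
    unfolding vacant_count_def by (rule card_mono[OF fB sub])
  also have "card B \<le> (\<Sum>i\<in>{0..<K div 2}. card (\<Union>e\<in>{0,1::int}.
     (\<lambda>j. (x+2*i+e, y+2*j + (if sv (fst (f i)) (snd (f i)) j then 0 else 1))) ` fst (f i)))"
    unfolding B_def by (rule card_UN_le) simp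
  also have "\<dots> \<le> (\<Sum>i\<in>{0..<K div 2}. 2 * card (fst (f i)))"
  proof (rule sum_mono)
    fix i assume i: "i \<in> {0..<K div 2}"
    have "card (\<Union>e\<in>{0,1::int}.
     (\<lambda>j. (x+2*i+e, y+2*j + (if sv (fst (f i)) (snd (f i)) j then 0 else 1))) ` fst (f i))
      \<le> (\<Sum>e\<in>{0,1::int}. card ((\<lambda>j. (x+2*i+e, y+2*j + (if sv (fst (f i)) (snd (f i)) j then 0 else 1))) ` fst (f i)))"
      by (rule card_UN_le) simp
    also have "\<dots> \<le> (\<Sum>e\<in>{0,1::int}. card (fst (f i)))"
      by (rule sum_mono) (rule card_image_le[OF fin[OF i]])
    finally show "card (\<Union>e\<in>{0,1::int}.
     (\<lambda>j. (x+2*i+e, y+2*j + (if sv (fst (f i)) (snd (f i)) j then 0 else 1))) ` fst (f i)) \<le> 2 * card (fst (f i))"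
      by simp
  qed
  finally show ?thesis .
qed



lemma weight_bound:
  assumes K: "K \<ge> 1" "even K" and L: "L \<ge> 1" "even L" and lam: "lam \<ge> 1"
    and f: "f \<in> PiE {0..<K div 2} (\<lambda>_. SS (L div 2))"
  shows "weight x y K L lam (cfg x y K L f) \<ge> (\<Prod>i\<in>{0..<K div 2}. (lam powr (-1/2)) ^ card (fst (f i)))"
proof -
  let ?V = "vacant_count x y K L (cfg x y K L f)"
  have V: "real ?V \<le> (\<Sum>i\<in>{0..<K div 2}. 2 * real (card (fst (f i))))"
  proof -
    have "real ?V \<le> real (\<Sum>i\<in>{0..<K div 2}. 2 * card (fst (f i)))"
      using vac_count[OF K L f, of x y] by (simp only: of_nat_le_iff)
    thus ?thesis by (simp add: of_nat_sum)
  qed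
  have "(\<Prod>i\<in>{0..<K div 2}. (lam powr (-1/2)) ^ card (fst (f i)))
      = (\<Prod>i\<in>{0..<K div 2}. lam powr (-1/2 * real (card (fst (f i)))))"
  proof (intro prod.cong refl)
    fix i
    have "(lam powr (-1/2)) ^ card (fst (f i)) = (lam powr (-1/2)) powr real (card (fst (f i)))"
      using lam by (simp add: powr_realpow)
    also have "\<dots> = lam powr (-1/2 * real (card (fst (f i))))" by (simp add: powr_powr)
    finally show "(lam powr (-1/2)) ^ card (fst (f i)) = lam powr (-1/2 * real (card (fst (f i))))" .
  qed
  also have "\<dots> = lam powr (\<Sum>i\<in>{0..<K div 2}. -1/2 * real (card (fst (f i))))"
    using lam by (simp add: powr_sum)
  also have "\<dots> \<le> lam powr (- (1/4) * real ?V)"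
  proof (rule powr_mono[OF _ lam])
    have "(\<Sum>i\<in>{0..<K div 2}. -1/2 * real (card (fst (f i)))) = -(1/4) * (\<Sum>i\<in>{0..<K div 2}. 2 * real (card (fst (f i))))"
      by (simp add: sum_distrib_left)
    thus "(\<Sum>i\<in>{0..<K div 2}. -1/2 * real (card (fst (f i)))) \<le> - (1/4) * real ?V" using V by linarith
  qed
  finally show ?thesis by (simp add: weight_def)
qed

lemma SS_sum:
  fixes t :: real
  assumes "0 \<le> t" "t \<le> 1"
  shows "(\<Sum>g\<in>SS n. t ^ card (fst g)) \<ge> (1 + t) ^ nat n"
proof -
  define E where "E = {G. G \<subseteq> {0..<n} \<and> even (card G)}"
  have SSE: "SS n = E \<times> UNIV"
    by (auto simp: SS_def good_def E_def intro: finite_subset[of _ "{0..<n}"])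
  have fE: "finite E" unfolding E_def by (rule finite_subset[of _ "Pow {0..<n}"]) auto
  have "(\<Sum>g\<in>SS n. t ^ card (fst g)) = (\<Sum>G\<in>E. \<Sum>p\<in>(UNIV::bool set). t ^ card G)"
    unfolding SSE sum.cartesian_product by (simp add: case_prod_unfold)
  also have "\<dots> = 2 * (\<Sum>G\<in>E. t ^ card G)"
    by (simp add: UNIV_bool sum_distrib_left)
  finally show ?thesis using even_sum_bound[of "{0..<n}" t] assms unfolding E_def by simp
qed

lemma Z_lower:
  assumes r: "even_rect x y K L" and lam: "lam \<ge> 1"
  shows "Z_per x y K L lam \<ge> (1 + lam powr (-1/2)) ^ (nat (K div 2) * nat (L div 2))"
proof -
  have K: "K \<ge> 1" "even K" and L: "L \<ge> 1" "even L" using r by (auto simp: even_rect_def)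
  define t where "t = lam powr (-1/2)"
  have t0: "0 \<le> t" by (simp add: t_def)
  have t1: "t \<le> 1" unfolding t_def using powr_mono[of "-1/2" 0 lam] lam by simp
  define I where "I = {0..<K div 2}"
  define P where "P = PiE I (\<lambda>_. SS (L div 2))"
  have fP: "finite P" unfolding P_def I_def by (intro finite_PiE) (auto simp: SS_finite)
  have sub: "cfg x y K L ` P \<subseteq> Omega_per K L"
    unfolding P_def I_def Omega_per_def
  proof (clarify, intro conjI allI)
    fix f assume f: "f \<in> PiE {0..<K div 2} (\<lambda>_. SS (L div 2))"
    show "cfg x y K L f \<in> Omega"
      by (rule cfg_Omega[OF K L]) (use PiE_mem[OF f] in \<open>auto simp: SS_def\<close>)
    fix u :: "int \<times> int"
    show "cfg x y K L f (fst u + K, snd u) = cfg x y K L f u" using cfg_per1 by simp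
    show "cfg x y K L f (fst u, snd u + L) = cfg x y K L f u" using cfg_per2 by simp
  qed
  have inj: "inj_on (cfg x y K L) P"
    unfolding P_def I_def by (rule inj_onI) (rule cfg_inj[OF K L])
  have "(1 + t) ^ (nat (K div 2) * nat (L div 2)) = (\<Prod>i\<in>I. (1 + t) ^ nat (L div 2))"
    by (simp add: I_def) (metis power_mult mult.commute)
  also have "\<dots> \<le> (\<Prod>i\<in>I. \<Sum>g\<in>SS (L div 2). t ^ card (fst g))"
    by (rule prod_mono) (use SS_sum[OF t0 t1] t0 in auto)
  also have "\<dots> = (\<Sum>f\<in>P. \<Prod>i\<in>I. t ^ card (fst (f i)))"
    unfolding P_def by (rule prod_sum_PiE) (auto simp: I_def SS_finite)
  also have "\<dots> \<le> (\<Sum>f\<in>P. weight x y K L lam (cfg x y K L f))"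
    by (rule sum_mono) (use weight_bound[OF K L lam] in \<open>auto simp: P_def I_def t_def\<close>)
  also have "\<dots> = (\<Sum>\<sigma>\<in>cfg x y K L ` P. weight x y K L lam \<sigma>)"
    by (rule sum.reindex[OF inj, symmetric, unfolded comp_def])
  also have "\<dots> \<le> Z_per x y K L lam"
    unfolding Z_per_def
    by (rule sum_mono2[OF Omega_per_finite[OF K(1) L(1)] sub]) (simp add: weight_def)
  finally show ?thesis by (simp add: t_def)
qed



theorem corollary4p3:
  fixes c :: real
  assumes "c < 1/4"
  shows "\<exists>lam0::real. \<forall>lam>lam0. \<forall>x y K L :: int. even_rect x y K L \<longrightarrow>
           Z_per x y K L lam \<ge> exp (c * lam powr (-1/2) * real_of_int (K * L))"
proof -
  define d where "d = 1 - 4*c"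
  have d0: "d > 0" using assms by (simp add: d_def)
  show ?thesis
  proof (rule exI[of _ "max 1 (1/d^2)"], intro allI impI)
    fix lam :: real and x y K L :: int
    assume lam: "max 1 (1/d^2) < lam" and r: "even_rect x y K L"
    have l1: "lam \<ge> 1" "lam > 1/d^2" using lam by auto
    define t where "t = lam powr (-1/2)"
    have t0: "t > 0" using l1 by (simp add: t_def)
    have t1: "t \<le> 1" unfolding t_def using powr_mono[of "-1/2" 0 lam] l1 by simp
    have "t^2 = lam powr (-1/2 + -1/2)" unfolding t_def power2_eq_square powr_add by simp
    also have "\<dots> = lam powr (-1)" by simp
    also have "\<dots> = 1/lam" using l1 by (simp add: powr_minus divide_inverse)
    also have "\<dots> < 1/(1/d^2)" using l1 d0 by (intro divide_strict_left_mono) auto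
    also have "\<dots> = d^2" by simp
    finally have "t^2 < d^2" .
    hence td: "t < d" using d0 by (intro power_less_imp_less_base[of t 2 d]) auto
    have ln: "ln (1 + t) \<ge> 4*c*t"
    proof -
      have "t - t^2 \<le> ln (1 + t)" using ln_one_plus_pos_lower_bound t0 t1 by simp
      moreover have "t - t^2 - 4*c*t = t * (d - t)" by (simp add: d_def power2_eq_square algebra_simps)
      moreover have "t * (d - t) \<ge> 0" using t0 td by simp
      ultimately show ?thesis by linarith
    qed
    have K: "K \<ge> 1" "even K" and L: "L \<ge> 1" "even L" using r by (auto simp: even_rect_def)
    define N where "N = nat (K div 2) * nat (L div 2)"
    have KL: "real_of_int (K*L) = 4 * real N"
    proof -
      have e: "K = 2*(K div 2)" "L = 2*(L div 2)" using K L by simp_all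
      have p: "K div 2 \<ge> 0" "L div 2 \<ge> 0" using K L by simp_all
      have "real N = real_of_int (K div 2) * real_of_int (L div 2)"
        unfolding N_def using p by simp
      moreover have "real_of_int (K*L) = real_of_int (2*(K div 2) * (2*(L div 2)))" using e by simp
      ultimately show ?thesis by simp
    qed
    have "exp (c * lam powr (-1/2) * real_of_int (K * L)) = exp (real N * (4*c*t))"
      unfolding KL t_def by (simp add: algebra_simps)
    also have "\<dots> \<le> exp (real N * ln (1 + t))" using ln by (simp add: mult_left_mono)
    also have "\<dots> = (1 + t) ^ N" using t0 by (simp add: exp_of_nat_mult)
    also have "\<dots> \<le> Z_per x y K L lam" using Z_lower[OF r l1(1)] by (simp add: N_def t_def)
    finally show "Z_per x y K L lam \<ge> exp (c * lam powr (-1/2) * real_of_int (K * L))" .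
  qed
qed

end
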